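(* Let $\mu$ be a positive Borel measure on $\mathbb{R}$, absolutely continuous with respect to Lebesgue measure, with finite moments of all orders, supported on a set $E$ with infinitely many points, let $c\in\mathbb{R}\setminus E$ and $N>0$. With the notation of the context, for every $n\ge1$, $$Q_n^{c,N}(x)=Q_n^c(x)-N\,Q_n^{c,N}(c)\,K_{n-1}^c(x,c),\qquad Q_n^{c,N}(c)=\frac{Q_n^c(c)}{1+NK_{n-1}^c(c,c)}=\kappa_n^{-1}Q_n^c(c),$$ where $\kappa_n=1+NB_n^c$.
   Context: $\{P_n\}$ is the monic orthogonal polynomial sequence (MOPS) for $\mu$, $\|f\|_\mu^2=\int f^2d\mu$. $\{Q_n^c\}$ is the MOPS for $\langle f,g\rangle_\nu=\int fg\frac{1}{x-c}d\mu$, $\|f\|_\nu^2=\langle f,f\rangle_\nu$, and $K_n^c(x,y)=\sum_{k=0}^n\frac{Q_k^c(x)Q_k^c(y)}{\|Q_k^c\|_\nu^2}$. $\{Q_n^{c,N}\}$ is the MOPS for $\langle f,g\rangle_{\nu_N}=\int fg\frac{1}{x-c}d\mu+Nf(c)g(c)$. $B_n^c=\frac{-Q_n^c(c)P_{n-1}(c)}{\|P_{n-1}\|_\mu^2}$. *)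

theory Defs
  imports "HOL-Analysis.Analysis" "HOL-Computational_Algebra.Polynomial"
begin

definition msupport :: "real measure \<Rightarrow> real set" where
  "msupport M = {x. \<forall>e>0. emeasure M (ball x e) > 0}"

definition ip_mu :: "real measure \<Rightarrow> real poly \<Rightarrow> real poly \<Rightarrow> real" where
  "ip_mu M f g = (\<integral>x. poly f x * poly g x \<partial>M)"

definition ip_nu :: "real measure \<Rightarrow> real \<Rightarrow> real poly \<Rightarrow> real poly \<Rightarrow> real" where
  "ip_nu M c f g = (\<integral>x. poly f x * poly g x / (x - c) \<partial>M)"

definition ip_nuN :: "real measure \<Rightarrow> real \<Rightarrow> real \<Rightarrow> real poly \<Rightarrow> real poly \<Rightarrow> real" where
  "ip_nuN M c N f g = ip_nu M c f g + N * poly f c * poly g c"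

definition is_MOPS :: "(real poly \<Rightarrow> real poly \<Rightarrow> real) \<Rightarrow> (nat \<Rightarrow> real poly) \<Rightarrow> bool" where
  "is_MOPS B Q \<longleftrightarrow>
     (\<forall>n. degree (Q n) = n \<and> lead_coeff (Q n) = 1 \<and> B (Q n) (Q n) \<noteq> 0) \<and>
     (\<forall>m n. m \<noteq> n \<longrightarrow> B (Q m) (Q n) = 0)"

definition kernelK :: "real measure \<Rightarrow> real \<Rightarrow> (nat \<Rightarrow> real poly) \<Rightarrow> nat \<Rightarrow> real \<Rightarrow> real \<Rightarrow> real" where
  "kernelK M c Q n x y = (\<Sum>k\<le>n. poly (Q k) x * poly (Q k) y / ip_nu M c (Q k) (Q k))"

definition Bc :: "real measure \<Rightarrow> real \<Rightarrow> (nat \<Rightarrow> real poly) \<Rightarrow> (nat \<Rightarrow> real poly) \<Rightarrow> nat \<Rightarrow> real" where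
  "Bc M c P Q n = - poly (Q n) c * poly (P (n - 1)) c / ip_mu M (P (n - 1)) (P (n - 1))"

end

theory Submission imports Defs begin

definition symbil :: "(real poly \<Rightarrow> real poly \<Rightarrow> real) \<Rightarrow> bool" where
"symbil B \<longleftrightarrow> (\<forall>p q. B p q = B q p) \<and> (\<forall>p q r. B (p+q) r = B p r + B q r)
   \<and> (\<forall>a p r. B (smult a p) r = a * B p r)"

lemma symbil_zero: "symbil B \<Longrightarrow> B 0 r = 0"
  unfolding symbil_def by (metis mult_zero_left smult_0_left)

lemma symbil_sym: "symbil B \<Longrightarrow> B p q = B q p"
  unfolding symbil_def by blast

lemma symbil_add: "symbil B \<Longrightarrow> B (p+q) r = B p r + B q r"
  unfolding symbil_def by blast

lemma symbil_smult: "symbil B \<Longrightarrow> B (smult a p) r = a * B p r"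
  unfolding symbil_def by blast

lemma symbil_diff: "symbil B \<Longrightarrow> B (p - q) r = B p r - B q r"
  by (metis symbil_add diff_add_cancel add_diff_cancel_right')

lemma symbil_sum: "symbil B \<Longrightarrow> B (\<Sum>k\<in>A. f k) r = (\<Sum>k\<in>A. B (f k) r)"
  by (induction A rule: infinite_finite_induct) (auto simp: symbil_zero symbil_add)

lemma deg_diff_le:
  fixes p q :: "real poly"
  assumes "degree p \<le> Suc m" "degree q \<le> Suc m" "coeff p (Suc m) = coeff q (Suc m)"
  shows "degree (p - q) \<le> m"
proof (rule degree_le, intro allI impI)
  fix i assume "m < i"
  show "coeff (p - q) i = 0"
  proof (cases "i = Suc m")
    case True thus ?thesis using assms by simp
  next
    case False
    hence "i > Suc m" using \<open>m < i\<close> by simp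
    thus ?thesis using assms by (simp add: coeff_eq_0)
  qed
qed

lemma mops_span:
  fixes Q :: "nat \<Rightarrow> real poly"
  assumes Q: "\<forall>n. degree (Q n) = n \<and> lead_coeff (Q n) = 1"
  shows "degree p \<le> m \<Longrightarrow> \<exists>a. p = (\<Sum>k\<le>m. smult (a k) (Q k))"
proof (induction m arbitrary: p)
  case 0
  have "Q 0 = [:coeff (Q 0) 0:]" using Q by (metis degree_0_id)
  hence Q0: "Q 0 = 1" using Q by (metis One_nat_def one_pCons)
  have "p = [:coeff p 0:]" using 0 by (metis degree_0_id le_zero_eq)
  hence "p = smult (coeff p 0) (Q 0)" using Q0 by simp
  thus ?case by auto
next
  case (Suc m)
  define r where "r = p - smult (coeff p (Suc m)) (Q (Suc m))"
  have "degree r \<le> m" unfolding r_def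
    apply (rule deg_diff_le)
    using Suc.prems Q apply (auto intro: order.trans[OF degree_smult_le])
    by (metis mult.right_neutral)
  then obtain a where a: "r = (\<Sum>k\<le>m. smult (a k) (Q k))" using Suc.IH by blast
  define a' where "a' = a(Suc m := coeff p (Suc m))"
  have "(\<Sum>k\<le>Suc m. smult (a' k) (Q k)) = (\<Sum>k\<le>m. smult (a' k) (Q k)) + smult (coeff p (Suc m)) (Q (Suc m))"
    by (simp add: a'_def)
  also have "(\<Sum>k\<le>m. smult (a' k) (Q k)) = r" unfolding a by (rule sum.cong) (auto simp: a'_def)
  finally have "p = (\<Sum>k\<le>Suc m. smult (a' k) (Q k))" by (simp add: r_def)
  thus ?case by blast
qed

lemma mops_expand:
  assumes B: "symbil B" and M: "is_MOPS B Q" and d: "degree p \<le> m"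
  shows "p = (\<Sum>k\<le>m. smult (B p (Q k) / B (Q k) (Q k)) (Q k))"
proof -
  have Q: "\<forall>n. degree (Q n) = n \<and> lead_coeff (Q n) = 1" and nz: "\<And>n. B (Q n) (Q n) \<noteq> 0"
    and orth: "\<And>i j. i \<noteq> j \<Longrightarrow> B (Q i) (Q j) = 0"
    using M unfolding is_MOPS_def by metis+
  obtain a where a: "p = (\<Sum>k\<le>m. smult (a k) (Q k))" using mops_span[OF Q d] by blast
  have "B p (Q j) = a j * B (Q j) (Q j)" if "j \<le> m" for j
  proof -
    have "B p (Q j) = (\<Sum>k\<le>m. a k * B (Q k) (Q j))"
      by (subst a) (simp add: symbil_sum[OF B] symbil_smult[OF B])
    also have "\<dots> = (\<Sum>k\<le>m. if k = j then a j * B (Q j) (Q j) else 0)"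
      by (rule sum.cong) (auto simp: orth)
    also have "\<dots> = a j * B (Q j) (Q j)" using that by simp
    finally show ?thesis .
  qed
  hence "\<And>j. j \<le> m \<Longrightarrow> a j = B p (Q j) / B (Q j) (Q j)" using nz by (simp add: field_simps)
  hence "p = (\<Sum>k\<le>m. smult (B p (Q k) / B (Q k) (Q k)) (Q k))"
    by (subst a) (rule sum.cong, auto)
  thus ?thesis .
qed

lemma mops_orth:
  assumes B: "symbil B" and M: "is_MOPS B Q" and d: "degree p < j"
  shows "B p (Q j) = 0"
proof -
  obtain m where j: "j = Suc m" using d by (cases j) auto
  have Q: "\<forall>n. degree (Q n) = n \<and> lead_coeff (Q n) = 1"
    and orth: "\<And>i j. i \<noteq> j \<Longrightarrow> B (Q i) (Q j) = 0"
    using M unfolding is_MOPS_def by metis+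
  obtain a where a: "p = (\<Sum>k\<le>m. smult (a k) (Q k))" using mops_span[OF Q, of p m] d j by auto
  have "B p (Q j) = (\<Sum>k\<le>m. a k * B (Q k) (Q j))"
    by (subst a) (simp add: symbil_sum[OF B] symbil_smult[OF B])
  also have "\<dots> = 0" by (rule sum.neutral) (auto simp: orth j)
  finally show ?thesis .
qed


lemma meas_poly[measurable]: "(\<lambda>x::real. poly p x) \<in> borel_measurable borel"
  by (intro borel_measurable_continuous_onI continuous_intros)

lemma ms: assumes "sets M = sets borel" "f \<in> borel_measurable borel" shows "f \<in> borel_measurable M"
  using assms by (metis measurable_cong_sets)

lemma integrable_poly:
  fixes M :: "real measure" and p :: "real poly"
  assumes moments: "\<And>k::nat. integrable M (\<lambda>x. x ^ k)"
  shows "integrable M (\<lambda>x. poly p x)"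
proof -
  have "integrable M (\<lambda>x. \<Sum>i\<le>degree p. coeff p i * x ^ i)"
    by (rule Bochner_Integration.integrable_sum, rule Bochner_Integration.integrable_mult_right, rule moments)
  moreover have "(\<lambda>x. \<Sum>i\<le>degree p. coeff p i * x ^ i) = (\<lambda>x. poly p x)"
    by (simp add: poly_altdef)
  ultimately show ?thesis by simp
qed

lemma symbil_mu:
  assumes moments: "\<And>k::nat. integrable M (\<lambda>x. x ^ k)"
  shows "symbil (ip_mu M)"
proof -
  have I: "integrable M (\<lambda>x. poly p x * poly q x)" for p q
    using integrable_poly[OF moments, of "p*q"] by simp
  have a: "(\<integral>x. poly (p+q) x * poly r x \<partial>M) = (\<integral>x. poly p x * poly r x \<partial>M) + (\<integral>x. poly q x * poly r x \<partial>M)" for p q r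
    by (simp add: distrib_right I)
  have b: "(\<integral>x. poly (smult a p) x * poly r x \<partial>M) = a * (\<integral>x. poly p x * poly r x \<partial>M)" for a p r
    by (simp add: mult.assoc)
  show ?thesis unfolding symbil_def ip_mu_def using a b by (simp add: mult.commute)
qed

lemma null_ball:
  assumes sets_M: "sets M = sets borel" and c_out: "c \<notin> msupport M"
  obtains e where "e > 0" "AE x in M. dist c x \<ge> e"
proof -
  obtain e where e: "e > 0" "\<not> emeasure M (ball c e) > 0" using c_out unfolding msupport_def by auto
  have "ball c e \<in> sets M" using sets_M by simp
  hence "ball c e \<in> null_sets M" using e by (auto intro: null_setsI)
  hence "AE x in M. x \<notin> ball c e" by (rule AE_not_in)
  hence "AE x in M. dist c x \<ge> e" by eventually_elim auto
  thus ?thesis using e that by blast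
qed

lemma integrable_nu:
  assumes sets_M: "sets M = sets borel" and moments: "\<And>k::nat. integrable M (\<lambda>x. x ^ k)"
    and c_out: "c \<notin> msupport M"
  shows "integrable M (\<lambda>x. poly p x / (x - c))"
proof -
  obtain e where e: "e > 0" "AE x in M. dist c x \<ge> e" using null_ball[OF sets_M c_out] by blast
  have meas: "(\<lambda>x. poly p x / (x - c)) \<in> borel_measurable M"
  proof -
    have "(\<lambda>x. poly p x / (x - c)) \<in> borel_measurable borel" by measurable
    thus ?thesis using ms[OF sets_M] by blast
  qed
  show ?thesis
  proof (rule Bochner_Integration.integrable_bound[OF _ meas])
    show "integrable M (\<lambda>x. poly p x / e)" using integrable_poly[OF moments] by simp
    show "AE x in M. norm (poly p x / (x - c)) \<le> norm (poly p x / e)"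
      using e(2)
    proof eventually_elim
      case (elim x)
      hence "e \<le> \<bar>x - c\<bar>" by (simp add: dist_real_def abs_minus_commute)
      thus ?case using e(1)
        by (simp add: abs_divide divide_left_mono)
    qed
  qed
qed

lemma symbil_nu:
  assumes sets_M: "sets M = sets borel" and moments: "\<And>k::nat. integrable M (\<lambda>x. x ^ k)"
    and c_out: "c \<notin> msupport M"
  shows "symbil (ip_nu M c)"
proof -
  have I: "integrable M (\<lambda>x. poly p x * poly q x / (x - c))" for p q
    using integrable_nu[OF assms, of "p*q"] by simp
  have a: "(\<integral>x. poly (p+q) x * poly r x / (x - c) \<partial>M) = (\<integral>x. poly p x * poly r x / (x - c) \<partial>M) + (\<integral>x. poly q x * poly r x / (x - c) \<partial>M)" for p q r
    by (simp add: distrib_right add_divide_distrib I)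
  have b: "(\<integral>x. poly (smult a p) x * poly r x / (x - c) \<partial>M) = a * (\<integral>x. poly p x * poly r x / (x - c) \<partial>M)" for a p r
  proof -
    have "(\<lambda>x. poly (smult a p) x * poly r x / (x - c)) = (\<lambda>x. a * (poly p x * poly r x / (x - c)))" by auto
    thus ?thesis by (simp only:) (rule integral_mult_right_zero)
  qed
  show ?thesis unfolding symbil_def ip_nu_def using a b by (simp add: mult.commute)
qed

lemma symbil_nuN:
  assumes "symbil (ip_nu M c)" shows "symbil (ip_nuN M c N)"
  using assms unfolding symbil_def ip_nuN_def by (auto simp: algebra_simps)

lemma mu_nu:
  assumes sets_M: "sets M = sets borel" and c_out: "c \<notin> msupport M"
  shows "ip_mu M p q = ip_nu M c ([:-c,1:] * p) q"
proof -
  obtain e where e: "e > 0" "AE x in M. dist c x \<ge> e" using null_ball[OF sets_M c_out] by blast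
  show ?thesis unfolding ip_mu_def ip_nu_def
  proof (rule integral_cong_AE)
    show "(\<lambda>x. poly p x * poly q x) \<in> borel_measurable M" by (rule ms[OF sets_M]) measurable
    show "(\<lambda>x. poly ([:- c, 1:] * p) x * poly q x / (x - c)) \<in> borel_measurable M" by (rule ms[OF sets_M]) measurable
    show "AE x in M. poly p x * poly q x = poly ([:- c, 1:] * p) x * poly q x / (x - c)"
      using e(2)
    proof eventually_elim
      case (elim x)
      hence "x \<noteq> c" using e(1) by auto
      thus ?case by (simp add: field_simps)
    qed
  qed
qed


theorem lemma1:
  fixes M :: "real measure" and c N :: real
    and P Q QN :: "nat \<Rightarrow> real poly" and n :: nat
  assumes sets_M: "sets M = sets borel"
    and ac: "absolutely_continuous lborel M"
    and moments: "\<And>k::nat. integrable M (\<lambda>x. x ^ k)"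
    and inf_supp: "infinite (msupport M)"
    and c_out: "c \<notin> msupport M"
    and N_pos: "N > 0"
    and P_MOPS: "is_MOPS (ip_mu M) P"
    and Q_MOPS: "is_MOPS (ip_nu M c) Q"
    and QN_MOPS: "is_MOPS (ip_nuN M c N) QN"
    and n_ge: "n \<ge> 1"
  shows "(\<forall>x. poly (QN n) x = poly (Q n) x - N * poly (QN n) c * kernelK M c Q (n - 1) x c)
       \<and> poly (QN n) c = poly (Q n) c / (1 + N * kernelK M c Q (n - 1) c c)
       \<and> poly (QN n) c = inverse (1 + N * Bc M c P Q n) * poly (Q n) c"
proof -
  obtain m where n: "n = Suc m" using n_ge by (cases n) auto
  have m: "n - 1 = m" using n by simp
  define Bm where "Bm = ip_mu M"
  define Bn where "Bn = ip_nu M c"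
  define BN where "BN = ip_nuN M c N"
  have SM: "symbil Bm" unfolding Bm_def by (rule symbil_mu[OF moments])
  have SN: "symbil Bn" unfolding Bn_def by (rule symbil_nu[OF sets_M moments c_out])
  have SNN: "symbil BN" unfolding BN_def by (rule symbil_nuN[OF SN[unfolded Bn_def]])
  have PM: "is_MOPS Bm P" and QM: "is_MOPS Bn Q" and QNM: "is_MOPS BN QN"
    using P_MOPS Q_MOPS QN_MOPS by (simp_all add: Bm_def Bn_def BN_def)
  have degQ: "\<And>k. degree (Q k) = k" and lcQ: "\<And>k. lead_coeff (Q k) = 1"
    and nzQ: "\<And>k. Bn (Q k) (Q k) \<noteq> 0" and orthQ: "\<And>i j. i \<noteq> j \<Longrightarrow> Bn (Q i) (Q j) = 0"
    using QM unfolding is_MOPS_def by metis+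
  have degP: "\<And>k. degree (P k) = k" and lcP: "\<And>k. lead_coeff (P k) = 1"
    using PM unfolding is_MOPS_def by metis+
  have degQN: "\<And>k. degree (QN k) = k" and lcQN: "\<And>k. lead_coeff (QN k) = 1"
    using QNM unfolding is_MOPS_def by metis+
  define Kp where "Kp = (\<Sum>k\<le>m. smult (poly (Q k) c / Bn (Q k) (Q k)) (Q k))"
  have Keval: "poly Kp x = kernelK M c Q m x c" for x
    unfolding Kp_def kernelK_def poly_sum Bn_def by (rule sum.cong) auto
  have degK: "degree Kp \<le> m" unfolding Kp_def
    by (rule degree_sum_le) (auto intro: order.trans[OF degree_smult_le] simp: degQ)
  have reprod: "Bn q Kp = poly q c" if dq: "degree q \<le> m" for q
  proof -
    have "Bn q Kp = Bn Kp q" using symbil_sym[OF SN] .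
    also have "\<dots> = (\<Sum>k\<le>m. (Bn q (Q k) / Bn (Q k) (Q k)) * poly (Q k) c)"
      unfolding Kp_def symbil_sum[OF SN] symbil_smult[OF SN]
      by (rule sum.cong) (auto simp: symbil_sym[OF SN, of q])
    also have "\<dots> = poly (\<Sum>k\<le>m. smult (Bn q (Q k) / Bn (Q k) (Q k)) (Q k)) c"
      by (simp add: poly_sum)
    also have "(\<Sum>k\<le>m. smult (Bn q (Q k) / Bn (Q k) (Q k)) (Q k)) = q"
      using mops_expand[OF SN QM dq] by simp
    finally show ?thesis .
  qed
  define qc where "qc = poly (QN n) c"
  define D where "D = QN n - Q n"
  have degD: "degree D \<le> m" unfolding D_def
    using lcQ[of n] lcQN[of n] by (intro deg_diff_le) (auto simp: degQ degQN n)
  have BD: "Bn D (Q k) = - N * qc * poly (Q k) c" if "k \<le> m" for k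
  proof -
    have "Bn (Q n) (Q k) = 0" using that n by (intro orthQ) auto
    moreover have "BN (Q k) (QN n) = 0" using that n by (intro mops_orth[OF SNN QNM]) (auto simp: degQ)
    hence "BN (QN n) (Q k) = 0" by (simp add: symbil_sym[OF SNN])
    hence "Bn (QN n) (Q k) = - N * qc * poly (Q k) c"
      unfolding BN_def ip_nuN_def Bn_def qc_def by simp
    ultimately show ?thesis unfolding D_def symbil_diff[OF SN] by simp
  qed
  have part1: "poly (QN n) x = poly (Q n) x - N * qc * kernelK M c Q m x c" for x
  proof -
    have "poly D x = poly (\<Sum>k\<le>m. smult (Bn D (Q k) / Bn (Q k) (Q k)) (Q k)) x"
      using mops_expand[OF SN QM degD] by simp
    also have "\<dots> = (\<Sum>k\<le>m. (- N * qc) * (poly (Q k) c / Bn (Q k) (Q k) * poly (Q k) x))"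
      unfolding poly_sum by (rule sum.cong) (auto simp: BD)
    also have "\<dots> = - N * qc * poly Kp x"
      unfolding Kp_def poly_sum sum_distrib_left by (rule sum.cong) auto
    finally show ?thesis unfolding D_def Keval by simp
  qed
  define Kc where "Kc = kernelK M c Q m c c"
  have KcK: "poly Kp c = Kc" unfolding Kc_def Keval ..
  have eqc: "qc * (1 + N * Kc) = poly (Q n) c"
    using part1[of c] unfolding qc_def Kc_def by (simp add: algebra_simps)
  have nz: "1 + N * Kc \<noteq> 0"
  proof
    assume z: "1 + N * Kc = 0"
    have "BN Kp (QN k) = 0" if "k \<le> m" for k
    proof -
      have "BN Kp (QN k) = BN (QN k) Kp" by (simp add: symbil_sym[OF SNN])
      also have "\<dots> = poly (QN k) c * (1 + N * Kc)"
        unfolding BN_def ip_nuN_def Bn_def[symmetric] using reprod[of "QN k"] that KcK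
        by (simp add: degQN algebra_simps)
      finally show ?thesis using z by simp
    qed
    hence "Kp = (\<Sum>k\<le>m. smult (BN Kp (QN k) / BN (QN k) (QN k)) (QN k))"
      using mops_expand[OF SNN QNM degK] by simp
    also have "\<dots> = 0" by (rule sum.neutral) (auto simp: \<open>\<And>k. k \<le> m \<Longrightarrow> BN Kp (QN k) = 0\<close>)
    finally have "Kc = 0" using KcK by simp
    thus False using z by simp
  qed
  have part2: "qc = poly (Q n) c / (1 + N * Kc)"
    using eqc nz by (simp add: field_simps)
  define R where "R = [:-c, 1:] * P m"
  have Pnz: "P m \<noteq> 0" using lcP[of m] by auto
  have degR: "degree R = Suc m" unfolding R_def using Pnz by (subst degree_mult_eq) (auto simp: degP)
  have lcR: "coeff R (Suc m) = 1"
  proof -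
    have "coeff R (degree [:-c,1:] + degree (P m)) = 1"
      unfolding R_def coeff_mult_degree_sum using lcP[of m] by simp
    thus ?thesis by (simp add: degP)
  qed
  have degRQ: "degree (R - Q n) \<le> m"
    using lcQ[of n] degR lcR by (intro deg_diff_le) (auto simp: degQ n)
  have BmK: "Bm Kp (P m) = - poly (Q n) c"
  proof -
    have "Bm Kp (P m) = Bm (P m) Kp" by (rule symbil_sym[OF SM])
    also have "\<dots> = Bn R Kp"
      unfolding Bm_def Bn_def R_def by (rule mu_nu[OF sets_M c_out])
    also have "\<dots> = Bn (R - Q n) Kp + Bn (Q n) Kp"
      by (metis symbil_add[OF SN] diff_add_cancel)
    also have "Bn (Q n) Kp = 0" using symbil_sym[OF SN, of "Q n" Kp]
      mops_orth[OF SN QM, of Kp n] degK n by simp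
    also have "Bn (R - Q n) Kp = poly (R - Q n) c" by (rule reprod[OF degRQ])
    finally show ?thesis unfolding R_def by simp
  qed
  have BmK0: "Bm Kp (P k) = 0" if "k < m" for k
  proof -
    have dk: "degree ([:-c, 1:] * P k) \<le> m"
      using degree_mult_le[of "[:-c,1:]" "P k"] that by (simp add: degP)
    have "Bm Kp (P k) = Bm (P k) Kp" by (rule symbil_sym[OF SM])
    also have "\<dots> = Bn ([:-c, 1:] * P k) Kp"
      unfolding Bm_def Bn_def by (rule mu_nu[OF sets_M c_out])
    also have "\<dots> = 0" using reprod[OF dk] by simp
    finally show ?thesis .
  qed
  have "Kc = poly (\<Sum>k\<le>m. smult (Bm Kp (P k) / Bm (P k) (P k)) (P k)) c"
    using mops_expand[OF SM PM degK] KcK by simp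
  also have "\<dots> = (\<Sum>k\<le>m. if k = m then Bm Kp (P m) / Bm (P m) (P m) * poly (P m) c else 0)"
    unfolding poly_sum by (rule sum.cong) (auto simp: BmK0)
  also have "\<dots> = - poly (Q n) c * poly (P m) c / Bm (P m) (P m)" by (simp add: BmK)
  also have "\<dots> = Bc M c P Q n" unfolding Bc_def Bm_def m ..
  finally have part3: "Kc = Bc M c P Q n" .
  show ?thesis
    using part1 part2 part3 unfolding m qc_def Kc_def
    by (simp add: divide_inverse mult.commute)
qed

end
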